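(* Let $P$ be a positive, completely labelled causal logic program, let $p$ be an atom, let $\Pi_p$ be the set of non-redundant proofs of $p$ with respect to $P$, and let $I$ be the least causal model of $P$. Then for every causal graph $G$: $G\in\{\mathrm{graph}(\pi)\mid\pi\in\Pi_p\}$ if and only if $G$ is a $\le$-maximal element of $I(p)$.
   Context: Causal graphs, causal values, causal programs, causal models and least models are as follows. Causal graphs over a label set $Lb$: graphs $\langle V,E\rangle$, $V\subseteq Lb$, reflexively and transitively closed; $G\le G'$ iff $G\supseteq G'$; $G<G'$ iff $G\le G'$ and $G\ne G'$; $G*G'=(G\cup G')^*$, $G\cdot G'$ is the closure of the graph with vertices $V\cup V'$ and edges $E\cup E'\cup(V\times V')$. Causal values are down-sets of causal graphs; $*$ is intersection, $+$ union, $U\cdot U'={\downarrow}\{G\cdot G'\mid G\in U,G'\in U'\}$; label $l$ denotes ${\downarrow}$ of the graph with single edge $(l,l)$, and $1$ the set of all causal graphs. A rule is $t:H\leftarrow B_1,\dots,B_n$ with $t\in Lb\cup\{1\}$; a positive program has no default negation; a program is completely labelled if every rule has a label in $Lb$ and no two rules share a label. A causal interpretation $I$ (atoms to causal values) is a model of positive $P$ iff $(I(B_1)*\dots*I(B_n))\cdot t\subseteq I(H)$ for every rule; the least model exists. A proof of atom $p$ w.r.t. $P$ is a derivation tree $\pi(p)=\frac{\pi(B_1)\ \cdots\ \pi(B_n)}{p}(R)$ with $R\in P$, head $p$ and body $\{B_1,\dots,B_n\}$ (antecedent $\top$ when $n=0$). For a completely labelled program, $\mathrm{graph}(\pi)$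 is the reflexive–transitive closure of the graph whose vertices are the labels of all rules used in $\pi$ and which contains, for each sub-derivation using rule $R$ with label $m$ and immediate subproofs $\pi(B_i)$ whose last rule has label $l_i$, the edge $(l_i,m)$. A proof $\pi$ of $p$ is redundant if there is another proof $\pi'$ of $p$ with $\mathrm{graph}(\pi)<\mathrm{graph}(\pi')$; otherwise it is non-redundant. *)

theory Defs
  imports Main
begin

text \<open>Labels are the elements of the type 'l (the label set Lb).
  A graph is a pair (V, E) of a vertex set and an edge relation.\<close>

type_synonym 'l cgraph = "'l set \<times> ('l \<times> 'l) set"

definition causal_graph :: "'l cgraph \<Rightarrow> bool" where
  "causal_graph G \<longleftrightarrow> snd G \<subseteq> fst G \<times> fst G \<and> Id_on (fst G) \<subseteq> snd G \<and> trans (snd G)"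

definition gclose :: "'l cgraph \<Rightarrow> 'l cgraph" where
  "gclose G = (fst G, (snd G)\<^sup>+ \<union> Id_on (fst G))"

definition gle :: "'l cgraph \<Rightarrow> 'l cgraph \<Rightarrow> bool" where
  "gle G G' \<longleftrightarrow> fst G' \<subseteq> fst G \<and> snd G' \<subseteq> snd G"

definition gless :: "'l cgraph \<Rightarrow> 'l cgraph \<Rightarrow> bool" where
  "gless G G' \<longleftrightarrow> gle G G' \<and> G \<noteq> G'"

definition gprod :: "'l cgraph \<Rightarrow> 'l cgraph \<Rightarrow> 'l cgraph" where
  "gprod G G' = gclose (fst G \<union> fst G', snd G \<union> snd G' \<union> (fst G \<times> fst G'))"

definition causal_value :: "'l cgraph set \<Rightarrow> bool" where
  "causal_value U \<longleftrightarrow> (\<forall>G\<in>U. causal_graph G) \<and>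
     (\<forall>G\<in>U. \<forall>G'. causal_graph G' \<and> gle G' G \<longrightarrow> G' \<in> U)"

definition downset :: "'l cgraph set \<Rightarrow> 'l cgraph set" where
  "downset S = {G. causal_graph G \<and> (\<exists>H\<in>S. gle G H)}"

definition one_val :: "'l cgraph set" where
  "one_val = {G. causal_graph G}"

definition vprod :: "'l cgraph set \<Rightarrow> 'l cgraph set \<Rightarrow> 'l cgraph set" where
  "vprod U U' = downset {gprod G G' | G G'. G \<in> U \<and> G' \<in> U'}"

text \<open>The value denoted by a rule label t \<in> Lb \<union> {1}; None stands for 1.\<close>
definition label_val :: "'l option \<Rightarrow> 'l cgraph set" where
  "label_val t = (case t of None \<Rightarrow> one_val | Some l \<Rightarrow> downset {({l}, {(l, l)})})"

text \<open>A rule  t : H \<leftarrow> B1, ..., Bn, not C1, ..., not Cm  with label t \<in> Lb \<union> {1}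
  (None = 1), head H, positive body [B1..Bn], negative body [C1..Cm].\<close>
datatype ('a, 'l) rule =
  Rule (rlabel: "'l option") (rhead: 'a) (rpos: "'a list") (rneg: "'a list")

type_synonym ('a, 'l) program = "('a, 'l) rule set"

definition positive_program :: "('a, 'l) program \<Rightarrow> bool" where
  "positive_program P \<longleftrightarrow> (\<forall>R\<in>P. rneg R = [])"

definition completely_labelled :: "('a, 'l) program \<Rightarrow> bool" where
  "completely_labelled P \<longleftrightarrow> (\<forall>R\<in>P. rlabel R \<noteq> None) \<and>
     (\<forall>R\<in>P. \<forall>R'\<in>P. rlabel R = rlabel R' \<longrightarrow> R = R')"

type_synonym ('a, 'l) cinterp = "'a \<Rightarrow> 'l cgraph set"

definition causal_interp :: "('a, 'l) cinterp \<Rightarrow> bool" where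
  "causal_interp I \<longleftrightarrow> (\<forall>a. causal_value (I a))"

text \<open>I(B1) * ... * I(Bn): intersection, the empty product being 1.\<close>
definition body_val :: "('a, 'l) cinterp \<Rightarrow> 'a list \<Rightarrow> 'l cgraph set" where
  "body_val I bs = {G \<in> one_val. \<forall>b\<in>set bs. G \<in> I b}"

definition is_model :: "('a, 'l) program \<Rightarrow> ('a, 'l) cinterp \<Rightarrow> bool" where
  "is_model P I \<longleftrightarrow> causal_interp I \<and>
     (\<forall>R\<in>P. vprod (body_val I (rpos R)) (label_val (rlabel R)) \<subseteq> I (rhead R))"

definition least_model :: "('a, 'l) program \<Rightarrow> ('a, 'l) cinterp \<Rightarrow> bool" where
  "least_model P I \<longleftrightarrow> is_model P I \<and> (\<forall>J. is_model P J \<longrightarrow> (\<forall>a. I a \<subseteq> J a))"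

datatype ('a, 'l) ptree = PNode "('a, 'l) rule" "('a, 'l) ptree list"

fun proot :: "('a, 'l) ptree \<Rightarrow> ('a, 'l) rule" where
  "proot (PNode R subs) = R"

inductive is_proof :: "('a, 'l) program \<Rightarrow> ('a, 'l) ptree \<Rightarrow> 'a \<Rightarrow> bool" for P where
  "R \<in> P \<Longrightarrow> rhead R = p \<Longrightarrow> list_all2 (is_proof P) subs (rpos R)
     \<Longrightarrow> is_proof P (PNode R subs) p"

definition lab :: "('a, 'l) rule \<Rightarrow> 'l" where
  "lab R = the (rlabel R)"

fun pverts :: "('a, 'l) ptree \<Rightarrow> 'l set" where
  "pverts (PNode R subs) = insert (lab R) (\<Union>s\<in>set subs. pverts s)"

fun pedges :: "('a, 'l) ptree \<Rightarrow> ('l \<times> 'l) set" where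
  "pedges (PNode R subs) =
     (\<Union>s\<in>set subs. insert (lab (proot s), lab R) (pedges s))"

definition pgraph :: "('a, 'l) ptree \<Rightarrow> 'l cgraph" where
  "pgraph \<pi> = gclose (pverts \<pi>, pedges \<pi>)"

definition redundant :: "('a, 'l) program \<Rightarrow> ('a, 'l) ptree \<Rightarrow> 'a \<Rightarrow> bool" where
  "redundant P \<pi> p \<longleftrightarrow> (\<exists>\<pi>'. is_proof P \<pi>' p \<and> gless (pgraph \<pi>) (pgraph \<pi>'))"

definition nonredundant_proofs :: "('a, 'l) program \<Rightarrow> 'a \<Rightarrow> ('a, 'l) ptree set" where
  "nonredundant_proofs P p = {\<pi>. is_proof P \<pi> p \<and> \<not> redundant P \<pi> p}"

end

theory Submission
  imports Defs
begin

lemma gclose_causal: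
  assumes "E \<subseteq> V \<times> V"
  shows "causal_graph (gclose (V, E))"
proof -
  have t: "E\<^sup>+ \<subseteq> V \<times> V" using assms trancl_subset_Sigma by blast
  have "trans (E\<^sup>+ \<union> Id_on V)"
    unfolding trans_def by (auto intro: trancl_trans)
  then show ?thesis using t unfolding causal_graph_def gclose_def by auto
qed

lemma pedges_sub: "pedges \<pi> \<subseteq> pverts \<pi> \<times> pverts \<pi>"
proof (induction \<pi>)
  case (PNode R subs)
  have r: "lab (proot s) \<in> pverts s" for s by (cases s) auto
  show ?case using PNode r by fastforce
qed

lemma pgraph_causal: "causal_graph (pgraph \<pi>)"
  unfolding pgraph_def by (rule gclose_causal[OF pedges_sub])

lemma pverts_reach:
  "v \<in> pverts s \<Longrightarrow> v = lab (proot s) \<or> (v, lab (proot s)) \<in> (pedges s)\<^sup>+"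
proof (induction s)
  case (PNode R subs)
  show ?case
  proof (cases "v = lab R")
    case False
    then obtain t where t: "t \<in> set subs" "v \<in> pverts t" using PNode.prems by auto
    have e: "(lab (proot t), lab R) \<in> pedges (PNode R subs)" using t by auto
    have sub: "pedges t \<subseteq> pedges (PNode R subs)" using t by auto
    from PNode.IH[OF t] have "v = lab (proot t) \<or> (v, lab (proot t)) \<in> (pedges (PNode R subs))\<^sup>+"
      using trancl_mono[OF _ sub] by blast
    then have "(v, lab R) \<in> (pedges (PNode R subs))\<^sup>+"
      using e by (auto intro: trancl_into_trancl)
    then show ?thesis by simp
  qed simp
qed

lemma gle_refl: "gle G G" unfolding gle_def by auto
lemma gle_trans: "gle A B \<Longrightarrow> gle B C \<Longrightarrow> gle A C" unfolding gle_def by auto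
lemma gle_antisym: "gle A B \<Longrightarrow> gle B A \<Longrightarrow> A = B"
  unfolding gle_def by (auto simp: prod_eq_iff)

lemma downset_value: "causal_value (downset S)"
  unfolding causal_value_def downset_def using gle_trans by blast

lemma causal_trans: "causal_graph G \<Longrightarrow> trans (snd G)" unfolding causal_graph_def by auto

lemma list_choose:
  assumes "\<forall>b\<in>set bs. \<exists>\<pi>. Q \<pi> b"
  shows "\<exists>subs. list_all2 Q subs bs"
  using assms
proof (induction bs)
  case Nil then show ?case by auto
next
  case (Cons b bs)
  then obtain subs where "list_all2 Q subs bs" by auto
  moreover obtain x where "Q x b" using Cons.prems by auto
  ultimately have "list_all2 Q (x # subs) (b # bs)" by auto
  then show ?case by blast
qed

definition Jint :: "('a, 'l) program \<Rightarrow> ('a, 'l) cinterp" where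
  "Jint P a = downset {pgraph \<pi> | \<pi>. is_proof P \<pi> a}"

lemma J_model:
  assumes cl: "completely_labelled P"
  shows "is_model P (Jint P)"
  unfolding is_model_def
proof (intro conjI ballI subsetI)
  show "causal_interp (Jint P)" unfolding causal_interp_def Jint_def using downset_value by blast
next
  fix R X assume R: "R \<in> P" and X: "X \<in> vprod (body_val (Jint P) (rpos R)) (label_val (rlabel R))"
  obtain l where l: "rlabel R = Some l" using cl R unfolding completely_labelled_def by auto
  have labR: "lab R = l" using l by (simp add: lab_def)
  from X obtain G G' where Xc: "causal_graph X" and XG: "gle X (gprod G G')"
    and G: "G \<in> body_val (Jint P) (rpos R)" and G': "G' \<in> label_val (rlabel R)"
    unfolding vprod_def downset_def by auto
  from G' l have G'c: "causal_graph G'" and lG': "l \<in> fst G'"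
    unfolding label_val_def downset_def gle_def by auto
  from G have Gc: "causal_graph G" and GJ: "\<forall>b\<in>set (rpos R). G \<in> Jint P b"
    unfolding body_val_def one_val_def by auto
  have ex: "\<forall>b\<in>set (rpos R). \<exists>\<pi>. is_proof P \<pi> b \<and> gle G (pgraph \<pi>)"
  proof
    fix b assume "b \<in> set (rpos R)"
    then have "G \<in> downset {pgraph \<pi> | \<pi>. is_proof P \<pi> b}" using GJ unfolding Jint_def by simp
    then obtain H where "H \<in> {pgraph \<pi> | \<pi>. is_proof P \<pi> b}" "gle G H" unfolding downset_def by blast
    then show "\<exists>\<pi>. is_proof P \<pi> b \<and> gle G (pgraph \<pi>)" by blast
  qed
  obtain subs where subs: "list_all2 (\<lambda>\<pi> b. is_proof P \<pi> b \<and> gle G (pgraph \<pi>)) subs (rpos R)"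
    using list_choose[OF ex] by (elim exE)
  define \<pi> where "\<pi> = PNode R subs"
  have pr: "is_proof P \<pi> (rhead R)" unfolding \<pi>_def
    by (rule is_proof.intros[OF R refl]) (rule list_all2_mono[OF subs], auto)
  have sg: "\<forall>s\<in>set subs. gle G (pgraph s)"
    using subs by (auto simp: list_all2_conv_all_nth in_set_conv_nth)
  let ?gp = "gprod G G'"
  have gpc: "causal_graph ?gp" unfolding gprod_def
    by (rule gclose_causal) (use Gc G'c in \<open>auto simp: causal_graph_def\<close>)
  have sub1: "pverts \<pi> \<subseteq> fst ?gp"
  proof -
    have "pverts s \<subseteq> fst G" if "s \<in> set subs" for s
      using sg that unfolding gle_def pgraph_def gclose_def by auto
    then show ?thesis using lG' labR unfolding \<pi>_def gprod_def gclose_def by auto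
  qed
  have sub2: "pedges \<pi> \<subseteq> snd ?gp"
  proof
    fix e assume "e \<in> pedges \<pi>"
    then obtain s where s: "s \<in> set subs" and e: "e = (lab (proot s), l) \<or> e \<in> pedges s"
      unfolding \<pi>_def using labR by auto
    have rs: "lab (proot s) \<in> pverts s" by (cases s) auto
    have vs: "pverts s \<subseteq> fst G" and es: "pedges s \<subseteq> snd G"
      using sg s unfolding gle_def pgraph_def gclose_def by auto
    have "e \<in> snd G \<union> snd G' \<union> fst G \<times> fst G'" using e rs vs es lG' by auto
    then show "e \<in> snd ?gp" unfolding gprod_def gclose_def by (simp add: r_into_trancl')
  qed
  have "gle ?gp (pgraph \<pi>)"
  proof -
    have "(pedges \<pi>)\<^sup>+ \<subseteq> snd ?gp"
    proof
      fix x assume "x \<in> (pedges \<pi>)\<^sup>+"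
      then have "x \<in> (snd ?gp)\<^sup>+" using trancl_mono[OF _ sub2] by blast
      then show "x \<in> snd ?gp" using trancl_id[OF causal_trans[OF gpc]] by simp
    qed
    moreover have "Id_on (pverts \<pi>) \<subseteq> snd ?gp"
      using sub1 gpc unfolding causal_graph_def by (auto simp: Id_on_def)
    ultimately show ?thesis using sub1 unfolding gle_def pgraph_def gclose_def by auto
  qed
  then have "gle X (pgraph \<pi>)" using XG gle_trans by blast
  then show "X \<in> Jint P (rhead R)" using Xc pr unfolding Jint_def downset_def by blast
qed

lemma proof_in_I:
  assumes cl: "completely_labelled P" and m: "is_model P I"
  shows "is_proof P \<pi> a \<Longrightarrow> pgraph \<pi> \<in> I a"
proof (induction rule: is_proof.induct)
  case (1 R p subs)
  obtain l where l: "rlabel R = Some l" using cl 1(1) unfolding completely_labelled_def by auto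
  have labR: "lab R = l" using l by (simp add: lab_def)
  have cv: "causal_value (I b)" for b using m unfolding is_model_def causal_interp_def by auto
  define V where "V = (\<Union>s\<in>set subs. pverts s)"
  define E where "E = (\<Union>s\<in>set subs. pedges s)"
  define G where "G = gclose (V, E)"
  have EV: "E \<subseteq> V \<times> V" unfolding E_def V_def using pedges_sub by fastforce
  have Gc: "causal_graph G" unfolding G_def by (rule gclose_causal[OF EV])
  have Gle: "gle G (pgraph s)" if "s \<in> set subs" for s
  proof -
    have "pedges s \<subseteq> E" "pverts s \<subseteq> V" using that unfolding E_def V_def by auto
    then show ?thesis unfolding gle_def G_def pgraph_def gclose_def
      using trancl_mono by (auto simp: Id_on_def)
  qed
  have "G \<in> body_val I (rpos R)"
  proof -
    have "G \<in> I b" if bin: "b \<in> set (rpos R)" for b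
    proof -
      obtain i where i: "i < length (rpos R)" "b = rpos R ! i" using bin unfolding in_set_conv_nth by metis
      have li: "length subs = length (rpos R)" using 1(3) by (simp add: list_all2_lengthD)
      have "pgraph (subs ! i) \<in> I b" using 1(3) i by (auto simp: list_all2_conv_all_nth)
      moreover have "gle G (pgraph (subs ! i))" using Gle i li by auto
      ultimately show ?thesis using cv[of b] Gc unfolding causal_value_def by blast
    qed
    then show ?thesis using Gc unfolding body_val_def one_val_def by auto
  qed
  moreover have G': "({l}, {(l, l)}) \<in> label_val (rlabel R)"
    using l unfolding label_val_def downset_def causal_graph_def by (auto simp: gle_def Id_on_def trans_def)
  moreover have "gle (pgraph (PNode R subs)) (gprod G ({l}, {(l, l)}))"
  proof -
    let ?\<pi> = "PNode R subs"
    let ?C = "snd (pgraph ?\<pi>)"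
    have pc: "causal_graph (pgraph ?\<pi>)" by (rule pgraph_causal)
    have vs: "pverts ?\<pi> = V \<union> {l}" unfolding V_def using labR by auto
    have Esub: "E \<subseteq> pedges ?\<pi>" unfolding E_def by auto
    have base: "snd G \<union> {(l, l)} \<union> V \<times> {l} \<subseteq> ?C"
    proof -
      have "snd G \<subseteq> ?C"
      proof
        fix x assume "x \<in> snd G"
        then have "x \<in> E\<^sup>+ \<or> x \<in> Id_on V" unfolding G_def gclose_def by simp
        then show "x \<in> ?C"
        proof
          assume "x \<in> E\<^sup>+"
          then have "x \<in> (pedges ?\<pi>)\<^sup>+" using trancl_mono[OF _ Esub] by blast
          then show ?thesis unfolding pgraph_def gclose_def by simp
        next
          assume "x \<in> Id_on V"
          then show ?thesis unfolding pgraph_def gclose_def using vs by (auto simp: Id_on_def)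
        qed
      qed
      moreover have "(l, l) \<in> ?C" unfolding pgraph_def gclose_def using vs by auto
      moreover have "(v, l) \<in> ?C" if vV: "v \<in> V" for v
      proof -
        obtain s where s: "s \<in> set subs" "v \<in> pverts s" using vV unfolding V_def by auto
        have e: "(lab (proot s), l) \<in> pedges ?\<pi>" using s labR by auto
        have ss: "pedges s \<subseteq> pedges ?\<pi>" using s by auto
        from pverts_reach[OF s(2)] have "v = lab (proot s) \<or> (v, lab (proot s)) \<in> (pedges ?\<pi>)\<^sup>+"
          using trancl_mono[OF _ ss] by blast
        then have "(v, l) \<in> (pedges ?\<pi>)\<^sup>+" using e by (auto intro: trancl_into_trancl)
        then show ?thesis unfolding pgraph_def gclose_def by auto
      qed
      ultimately show ?thesis by auto
    qed
    have fG: "fst G = V" unfolding G_def gclose_def by simp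
    have "snd (gprod G ({l}, {(l, l)})) \<subseteq> ?C"
    proof -
      have b2: "snd G \<union> {(l, l)} \<union> fst G \<times> {l} \<subseteq> ?C" using base fG by simp
      have "(snd G \<union> {(l, l)} \<union> fst G \<times> {l})\<^sup>+ \<subseteq> ?C"
      proof
        fix x assume "x \<in> (snd G \<union> {(l, l)} \<union> fst G \<times> {l})\<^sup>+"
        then have "x \<in> ?C\<^sup>+" using trancl_mono[OF _ b2] by blast
        then show "x \<in> ?C" using trancl_id[OF causal_trans[OF pc]] by simp
      qed
      moreover have "Id_on (V \<union> {l}) \<subseteq> ?C" unfolding pgraph_def gclose_def using vs by auto
      ultimately show ?thesis unfolding gprod_def gclose_def using fG by auto
    qed
    moreover have "fst (gprod G ({l}, {(l, l)})) \<subseteq> fst (pgraph ?\<pi>)"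
      unfolding gprod_def gclose_def pgraph_def using fG vs by auto
    ultimately show ?thesis unfolding gle_def by auto
  qed
  ultimately have "pgraph (PNode R subs) \<in> vprod (body_val I (rpos R)) (label_val (rlabel R))"
    unfolding vprod_def downset_def using pgraph_causal by blast
  then show ?case using m 1(1,2) unfolding is_model_def by auto
qed

lemma I_eq_J:
  assumes cl: "completely_labelled P" and lm: "least_model P I"
  shows "I a = Jint P a"
proof
  show "I a \<subseteq> Jint P a" using lm J_model[OF cl] unfolding least_model_def by blast
next
  have m: "is_model P I" using lm unfolding least_model_def by auto
  have cv: "causal_value (I a)" using m unfolding is_model_def causal_interp_def by auto
  show "Jint P a \<subseteq> I a"
  proof
    fix X assume "X \<in> Jint P a"
    then obtain \<pi> where "causal_graph X" "gle X (pgraph \<pi>)" "is_proof P \<pi> a"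
      unfolding Jint_def downset_def by auto
    then show "X \<in> I a" using proof_in_I[OF cl m] cv unfolding causal_value_def by blast
  qed
qed

theorem theorem3:
  fixes P :: "('a, 'l) program" and p :: 'a and I :: "('a, 'l) cinterp"
  assumes "positive_program P"
    and "completely_labelled P"
    and "least_model P I"
  shows "\<forall>G. G \<in> pgraph ` nonredundant_proofs P p \<longleftrightarrow>
             (G \<in> I p \<and> (\<forall>G'\<in>I p. \<not> gless G G'))"
proof
  fix G
  have Ip: "I p = Jint P p" by (rule I_eq_J[OF assms(2,3)])
  have inJ: "pgraph \<pi> \<in> Jint P p" if ip: "is_proof P \<pi> p" for \<pi>
  proof -
    have "pgraph \<pi> \<in> {pgraph \<pi> | \<pi>. is_proof P \<pi> p}" using ip by blast
    then show ?thesis unfolding Jint_def downset_def using pgraph_causal[of \<pi>] gle_refl[of "pgraph \<pi>"] by blast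
  qed
  have inJ': "\<exists>\<pi>. is_proof P \<pi> p \<and> gle H (pgraph \<pi>)" if "H \<in> Jint P p" for H
  proof -
    from that obtain K where "K \<in> {pgraph \<pi> | \<pi>. is_proof P \<pi> p}" "gle H K"
      unfolding Jint_def downset_def by blast
    then show ?thesis by blast
  qed
  show "G \<in> pgraph ` nonredundant_proofs P p \<longleftrightarrow> (G \<in> I p \<and> (\<forall>G'\<in>I p. \<not> gless G G'))"
  proof
    assume "G \<in> pgraph ` nonredundant_proofs P p"
    then obtain \<pi> where G: "G = pgraph \<pi>" and pr: "is_proof P \<pi> p" and nr: "\<not> redundant P \<pi> p"
      unfolding nonredundant_proofs_def by blast
    have "\<not> gless G G'" if G'J: "G' \<in> Jint P p" for G'
    proof
      assume gl: "gless G G'"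
      obtain \<pi>' where le': "gle G' (pgraph \<pi>')" and pr': "is_proof P \<pi>' p"
        using inJ'[OF G'J] by blast
      have l1: "gle G G'" and ne: "G \<noteq> G'" using gl unfolding gless_def by auto
      have l2: "gle G (pgraph \<pi>')" using gle_trans[OF l1 le'] .
      have "G \<noteq> pgraph \<pi>'"
      proof
        assume "G = pgraph \<pi>'"
        then have "gle G' G" using le' by simp
        then show False using gle_antisym[OF l1] ne by blast
      qed
      then have "gless (pgraph \<pi>) (pgraph \<pi>')" using l2 G unfolding gless_def by simp
      then show False using nr pr' unfolding redundant_def by blast
    qed
    then show "G \<in> I p \<and> (\<forall>G'\<in>I p. \<not> gless G G')" using Ip inJ[OF pr] G by simp
  next
    assume a: "G \<in> I p \<and> (\<forall>G'\<in>I p. \<not> gless G G')"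
    then obtain \<pi> where le: "gle G (pgraph \<pi>)" and pr: "is_proof P \<pi> p"
      using Ip inJ' by blast
    have "pgraph \<pi> \<in> I p" using inJ[OF pr] Ip by simp
    then have eq: "G = pgraph \<pi>" using a le unfolding gless_def by blast
    have "\<not> redundant P \<pi> p"
    proof
      assume "redundant P \<pi> p"
      then obtain \<pi>' where "is_proof P \<pi>' p" "gless (pgraph \<pi>) (pgraph \<pi>')"
        unfolding redundant_def by blast
      moreover then have "pgraph \<pi>' \<in> I p" using inJ Ip by simp
      ultimately show False using a eq by blast
    qed
    then show "G \<in> pgraph ` nonredundant_proofs P p"
      using eq pr unfolding nonredundant_proofs_def by blast
  qed
qed

end
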